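(* Let $T\ge 2$ and let the standing assumptions hold (domain diameter at most $D$, gradients bounded by $G$). Suppose that for some $\lambda\in[1/T,1]$ every $f_t$, $t=1,\dots,T$, is $\lambda$-strongly convex on $\mathcal{X}$. Let $\widehat{\lambda}\in\mathcal{P}_{str}$ satisfy $\widehat{\lambda}\le\lambda\le 2\widehat{\lambda}$ (such an element exists). Then the points $\mathbf{x}_1,\dots,\mathbf{x}_T$ produced by USC satisfy \[ \sum_{t=1}^T f_t(\mathbf{x}_t)-\min_{\mathbf{x}\in\mathcal{X}}\sum_{t=1}^T f_t(\mathbf{x})\le \min_{A\in\mathcal{A}_{str}} R(A,\widehat{\lambda}) + 2\Gamma GD\left(2+\frac{1}{\sqrt{\ln|\mathcal{E}|}}\right)+\frac{\Gamma^2G^2}{2\lambda\ln|\mathcal{E}|}. \] In particular, when $|\mathcal{A}_{str}|,|\mathcal{A}_{exp}|,|\mathcal{A}_{con}|$ are bounded by constants, the additive term is $O\big(\frac{\log\log T}{\lambda}\big)$.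
   Context: Setting (online convex optimization): $\mathcal{X}\subset\mathbb{R}^d$ is a nonempty closed convex set with $\max_{\mathbf{x},\mathbf{y}\in\mathcal{X}}\|\mathbf{x}-\mathbf{y}\|\le D$. For $t=1,\dots,T$, $f_t:\mathcal{X}\to\mathbb{R}$ are convex differentiable functions with $\max_{\mathbf{x}\in\mathcal{X}}\|\nabla f_t(\mathbf{x})\|\le G$. At round $t$ a learner outputs $\mathbf{x}_t\in\mathcal{X}$ depending only on $f_1,\dots,f_{t-1}$, then $f_t$ is revealed. An online algorithm (expert) is any such procedure. A function $f$ is $\lambda$-strongly convex on $\mathcal{X}$ if $f(\mathbf{y})\ge f(\mathbf{x})+\langle\nabla f(\mathbf{x}),\mathbf{y}-\mathbf{x}\rangle+\frac{\lambda}{2}\|\mathbf{y}-\mathbf{x}\|^2$ for all $\mathbf{x},\mathbf{y}\in\mathcal{X}$. Algorithm USC: Let $N=\lceil\log_2T\rceil$ and $\mathcal{P}_{str}=\mathcal{P}_{exp}=\{2^k/T: k=0,1,\dots,N\}$. Let $\mathcal{A}_{str},\mathcal{A}_{exp}$ be finite sets of online algorithms each taking a positive parameter, and $\mathcal{A}_{con}$ a finite set of online algorithms. The expert set $\mathcal{E}$ consists of the experts $E(A,\lambda')$ ($A$ run with parameter $\lambda'$) for $A\in\mathcal{A}_{str},\lambda'\in\mathcal{P}_{str}$; $E(A,\alpha')$ for $A\in\mathcal{A}_{exp},\alpha'\in\mathcal{P}_{exp}$; and $E(A)$ for $A\in\mathcal{A}_{con}$. Index them $E^1,\dots,E^{|\mathcal{E}|}$;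 every expert receives the full functions $f_1,f_2,\dots$ and outputs $\mathbf{x}_t^i\in\mathcal{X}$ at round $t$. Fix any $\bar{\mathbf{x}}\in\mathcal{X}$. USC outputs $\mathbf{x}_t=\sum_i p_t^i\mathbf{x}_t^i$ with weights given by Adapt-ML-Prod on the losses $\ell_t^i=\frac{\langle\nabla f_t(\mathbf{x}_t),\mathbf{x}_t^i-\bar{\mathbf{x}}\rangle+GD}{2GD}\in[0,1]$, $\ell_t=\sum_ip_t^i\ell_t^i$: namely $p_t^i=\eta_{t-1}^iw_{t-1}^i/\sum_j\eta_{t-1}^jw_{t-1}^j$, where $\eta_{t-1}^i=\min\{\frac12,\sqrt{\ln|\mathcal{E}|/(1+\sum_{s=1}^{t-1}(\ell_s-\ell_s^i)^2)}\}$ for $t\ge1$, $w_0^i=1/|\mathcal{E}|$, and $w_{t-1}^i=\big(w_{t-2}^i(1+\eta_{t-2}^i(\ell_{t-1}-\ell_{t-1}^i))\big)^{\eta_{t-1}^i/\eta_{t-2}^i}$ for $t\ge2$. Define $\Gamma=3\ln|\mathcal{E}|+\ln\big(1+\frac{|\mathcal{E}|}{2e}(1+\ln(T+1))\big)$. For $A\in\mathcal{A}_{str}$ and $\lambda'>0$, $R(A,\lambda')$ denotes a regret bound of $A$: a number such that whenever $f_1,\dots,f_T$ satisfy the setting and are all $\lambda'$-strongly convex, the outputs $\mathbf{y}_t$ of $A$ run with parameter $\lambda'$ satisfy $\sum_t f_t(\mathbf{y}_t)-\min_{\mathbf{x}\in\mathcal{X}}\sum_tf_t(\mathbf{x})\le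 R(A,\lambda')$. *)

theory Defs
  imports "HOL-Analysis.Analysis"
begin

text \<open>Sequences of loss functions are indexed by rounds: F t is f_t (rounds 1..T).
  A (deterministic) online algorithm maps the whole sequence of functions to a
  sequence of points; its output at round t may depend only on f_1,...,f_(t-1).\<close>

type_synonym 'a fseq = "nat \<Rightarrow> 'a \<Rightarrow> real"
type_synonym 'a online_alg = "'a fseq \<Rightarrow> nat \<Rightarrow> 'a"
type_synonym 'a param_alg = "real \<Rightarrow> 'a online_alg"

definition is_online_alg :: "'a set \<Rightarrow> 'a online_alg \<Rightarrow> bool" where
  "is_online_alg X alg \<longleftrightarrow>
     (\<forall>F t. 1 \<le> t \<longrightarrow> alg F t \<in> X) \<and>
     (\<forall>F F' t. (\<forall>s. 1 \<le> s \<and> s < t \<longrightarrow> F s = F' s) \<longrightarrow> alg F t = alg F' t)"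

definition oco_setting ::
  "'a::euclidean_space set \<Rightarrow> real \<Rightarrow> nat \<Rightarrow> 'a fseq \<Rightarrow> (nat \<Rightarrow> 'a \<Rightarrow> 'a) \<Rightarrow> bool" where
  "oco_setting X G T F gF \<longleftrightarrow>
     (\<forall>t\<in>{1..T}. convex_on X (F t) \<and>
        (\<forall>x\<in>X. (F t has_derivative (\<lambda>h. gF t x \<bullet> h)) (at x within X)) \<and>
        (\<forall>x\<in>X. norm (gF t x) \<le> G))"

definition strongly_convex_grad ::
  "'a::euclidean_space set \<Rightarrow> ('a \<Rightarrow> real) \<Rightarrow> ('a \<Rightarrow> 'a) \<Rightarrow> real \<Rightarrow> bool" where
  "strongly_convex_grad X f g lam \<longleftrightarrow>
     (\<forall>x\<in>X. \<forall>y\<in>X. f y \<ge> f x + g x \<bullet> (y - x) + lam / 2 * (norm (y - x))\<^sup>2)"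

definition regret :: "'a set \<Rightarrow> nat \<Rightarrow> 'a fseq \<Rightarrow> (nat \<Rightarrow> 'a) \<Rightarrow> real" where
  "regret X T F y = (\<Sum>t=1..T. F t (y t)) - (INF x\<in>X. \<Sum>t=1..T. F t x)"

definition is_str_regret_bound ::
  "'a::euclidean_space set \<Rightarrow> real \<Rightarrow> nat \<Rightarrow> 'a param_alg \<Rightarrow> real \<Rightarrow> real \<Rightarrow> bool" where
  "is_str_regret_bound X G T A lam' r \<longleftrightarrow>
     (\<forall>F gF. oco_setting X G T F gF \<and> (\<forall>t\<in>{1..T}. strongly_convex_grad X (F t) (gF t) lam')
        \<longrightarrow> regret X T F (A lam' F) \<le> r)"

definition Pgrid :: "nat \<Rightarrow> real set" where
  "Pgrid T = {2 ^ k / real T | k. k \<le> nat \<lceil>log 2 (real T)\<rceil>}"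

datatype 'a expert = EStr "'a param_alg" real | EExp "'a param_alg" real | ECon "'a online_alg"

fun expert_out :: "'a expert \<Rightarrow> 'a online_alg" where
  "expert_out (EStr A l) = A l"
| "expert_out (EExp A a) = A a"
| "expert_out (ECon A) = A"

definition usc_experts ::
  "'a param_alg set \<Rightarrow> 'a param_alg set \<Rightarrow> 'a online_alg set \<Rightarrow> nat \<Rightarrow> 'a expert set" where
  "usc_experts Astr Aexp Acon T =
     {EStr A l | A l. A \<in> Astr \<and> l \<in> Pgrid T} \<union>
     {EExp A a | A a. A \<in> Aexp \<and> a \<in> Pgrid T} \<union>
     {ECon A | A. A \<in> Acon}"

text \<open>Adapt-ML-Prod. The state after round t is (w_t, S_t) where
  S_t i = sum_{s=1}^t (l_s - l_s^i)^2, so eta_t^i = ml_eta |E| (S_t i).\<close>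

definition ml_eta :: "nat \<Rightarrow> real \<Rightarrow> real" where
  "ml_eta n S = min (1/2) (sqrt (ln (real n) / (1 + S)))"

definition ml_prob :: "'e set \<Rightarrow> ('e \<Rightarrow> real) \<Rightarrow> ('e \<Rightarrow> real) \<Rightarrow> 'e \<Rightarrow> real" where
  "ml_prob E w S i =
     ml_eta (card E) (S i) * w i / (\<Sum>j\<in>E. ml_eta (card E) (S j) * w j)"

definition ml_combine ::
  "'e set \<Rightarrow> ('e \<Rightarrow> nat \<Rightarrow> 'a::real_vector) \<Rightarrow> ('e \<Rightarrow> real) \<Rightarrow> ('e \<Rightarrow> real) \<Rightarrow> nat \<Rightarrow> 'a" where
  "ml_combine E out w S t = (\<Sum>i\<in>E. ml_prob E w S i *\<^sub>R out i t)"

definition usc_loss :: "real \<Rightarrow> real \<Rightarrow> 'a::real_inner \<Rightarrow> 'a \<Rightarrow> 'a \<Rightarrow> real" where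
  "usc_loss G D xb gr y = (gr \<bullet> (y - xb) + G * D) / (2 * G * D)"

fun usc_state ::
  "'e set \<Rightarrow> ('e \<Rightarrow> nat \<Rightarrow> 'a::real_inner) \<Rightarrow> (nat \<Rightarrow> 'a \<Rightarrow> 'a) \<Rightarrow> real \<Rightarrow> real \<Rightarrow> 'a
    \<Rightarrow> nat \<Rightarrow> ('e \<Rightarrow> real) \<times> ('e \<Rightarrow> real)" where
  "usc_state E out g G D xb 0 = ((\<lambda>i. 1 / real (card E)), (\<lambda>i. 0))"
| "usc_state E out g G D xb (Suc t) =
     (let (w, S) = usc_state E out g G D xb t;
          n = card E;
          x = ml_combine E out w S (Suc t);
          li = (\<lambda>i. usc_loss G D xb (g (Suc t) x) (out i (Suc t)));
          l = (\<Sum>i\<in>E. ml_prob E w S i * li i);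
          S' = (\<lambda>i. S i + (l - li i)\<^sup>2);
          w' = (\<lambda>i. (w i * (1 + ml_eta n (S i) * (l - li i)))
                       powr (ml_eta n (S' i) / ml_eta n (S i)))
      in (w', S'))"

definition USC ::
  "'a::euclidean_space param_alg set \<Rightarrow> 'a param_alg set \<Rightarrow> 'a online_alg set \<Rightarrow> nat
    \<Rightarrow> real \<Rightarrow> real \<Rightarrow> 'a \<Rightarrow> 'a fseq \<Rightarrow> (nat \<Rightarrow> 'a \<Rightarrow> 'a) \<Rightarrow> nat \<Rightarrow> 'a" where
  "USC Astr Aexp Acon T G D xb F gF t =
     (let E = usc_experts Astr Aexp Acon T;
          out = (\<lambda>i s. expert_out i F s);
          (w, S) = usc_state E out gF G D xb (t - 1)
      in ml_combine E out w S t)"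

definition usc_Gamma :: "nat \<Rightarrow> nat \<Rightarrow> real" where
  "usc_Gamma nE T = 3 * ln (real nE) + ln (1 + real nE / (2 * exp 1) * (1 + ln (real T + 1)))"

end

theory Submission imports Defs begin


lemma ln_one_minus_lb:
  fixes x :: real assumes "0 \<le> x" "x \<le> 1/2"
  shows "- x - x\<^sup>2 \<le> ln (1 - x)"
proof -
  let ?h = "\<lambda>x::real. ln (1 - x) + x + x\<^sup>2"
  have "?h 0 \<le> ?h x"
  proof (rule DERIV_nonneg_imp_increasing_open[OF assms(1)])
    fix y :: real assume y: "0 < y" "y < x"
    have "DERIV ?h y :> (- 1 / (1 - y) + 1 + 2 * y)"
      using y assms by (auto intro!: derivative_eq_intros simp: field_simps)
    moreover have "- 1 / (1 - y) + 1 + 2 * y \<ge> 0"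
    proof -
      have "- 1 / (1 - y) + 1 + 2 * y = y * (1 - 2*y) / (1 - y)" using y assms
        by (simp add: field_simps power2_eq_square)
      also have "\<dots> \<ge> 0" using y assms by (intro divide_nonneg_pos mult_nonneg_nonneg) auto
      finally show ?thesis .
    qed
    ultimately show "\<exists>z. DERIV ?h y :> z \<and> z \<ge> 0" by blast
  next
    show "continuous_on {0..x} ?h" using assms
      by (intro continuous_intros) auto
  qed
  thus ?thesis by simp
qed

lemma ln_one_plus_lb:
  fixes z :: real assumes "-1/2 \<le> z" "z \<le> 1"
  shows "z - z\<^sup>2 \<le> ln (1 + z)"
proof (cases "z \<ge> 0")
  case True thus ?thesis using ln_one_plus_pos_lower_bound assms by auto
next
  case False
  have "- (-z) - (-z)\<^sup>2 \<le> ln (1 - (-z))" by (rule ln_one_minus_lb) (use False assms in auto)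
  thus ?thesis by simp
qed

lemma young_powr:
  fixes y a :: real assumes "y > 0" "0 < a" "a \<le> 1"
  shows "y powr a \<le> y + (1/a - 1) / exp 1"
proof -
  define u where "u = a * ln y"
  have x: "y powr a = exp u" using assms by (simp add: powr_def u_def)
  have y: "y = exp u * exp (u * (1/a - 1))"
    using assms by (simp add: u_def field_simps flip: exp_add)
  have "exp (u * (1/a - 1)) \<ge> 1 + u * (1/a - 1)" by simp
  hence "y \<ge> exp u * (1 + u * (1/a - 1))" using y by (simp add: mult_left_mono)
  moreover have "- u * exp u \<le> 1 / exp 1"
  proof -
    have "1 + (-u - 1) \<le> exp (-u - 1)" by (rule exp_ge_add_one_self)
    hence "- u \<le> exp (-u) / exp 1" by (simp add: exp_diff)
    hence "- u * exp u \<le> exp (-u) / exp 1 * exp u" by (rule mult_right_mono) simp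
    thus ?thesis by (simp add: exp_minus field_simps)
  qed
  moreover have "1/a - 1 \<ge> 0" using assms by simp
  ultimately have "exp u \<le> y + (1/a - 1) * (- u * exp u)"
    by (simp add: algebra_simps)
  also have "\<dots> \<le> y + (1/a - 1) * (1 / exp 1)"
    using mult_left_mono[OF \<open>- u * exp u \<le> 1 / exp 1\<close> \<open>1/a - 1 \<ge> 0\<close>] by simp
  finally show ?thesis using x by simp
qed

lemma eta_pos: "ln (real n) > 0 \<Longrightarrow> S \<ge> 0 \<Longrightarrow> 0 < ml_eta n S"
  by (simp add: ml_eta_def)

lemma eta_half: "ml_eta n S \<le> 1/2"
  by (simp add: ml_eta_def)

lemma eta_sqrt: "ml_eta n S \<le> sqrt (ln (real n) / (1 + S))"
  by (simp add: ml_eta_def)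

lemma eta_anti: "ln (real n) > 0 \<Longrightarrow> 0 \<le> S \<Longrightarrow> S \<le> S' \<Longrightarrow> ml_eta n S' \<le> ml_eta n S"
  unfolding ml_eta_def
  by (intro min.mono order.refl real_sqrt_le_mono divide_left_mono) auto

lemma eta_ratio:
  assumes L: "ln (real n) > 0" and S: "0 \<le> S" "S \<le> S'"
  shows "ml_eta n S / ml_eta n S' \<le> sqrt ((1 + S') / (1 + S))"
proof -
  define a where "a = sqrt (ln (real n) / (1 + S))"
  define b where "b = sqrt (ln (real n) / (1 + S'))"
  have p: "1 + S > 0" "1 + S' > 0" using S by auto
  have "(ln (real n) / (1 + S)) / (ln (real n) / (1 + S')) = (1 + S') / (1 + S)"
    using L p by (simp add: divide_simps)
  hence ab: "a / b = sqrt ((1 + S') / (1 + S))" unfolding a_def b_def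
    by (simp add: real_sqrt_divide[symmetric])
  have b: "b > 0" using L S by (simp add: b_def)
  have one: "1 \<le> sqrt ((1 + S') / (1 + S))" using S by simp
  show ?thesis
  proof (cases "b \<ge> 1/2")
    case True
    have "a \<ge> b" using L S unfolding a_def b_def
      by (intro real_sqrt_le_mono divide_left_mono) auto
    have e1: "ml_eta n S = min (1/2) a" "ml_eta n S' = min (1/2) b" by (simp_all add: ml_eta_def a_def b_def)
    have h: "ml_eta n S = 1/2" "ml_eta n S' = 1/2" unfolding e1 using True \<open>a \<ge> b\<close> by auto
    show ?thesis unfolding h using one by simp
  next
    case False
    hence "ml_eta n S' = b" by (simp add: ml_eta_def b_def)
    moreover have "ml_eta n S \<le> a" by (simp add: ml_eta_def a_def)
    ultimately have "ml_eta n S / ml_eta n S' \<le> a / b" using b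
      by (simp add: divide_right_mono)
    thus ?thesis using ab by simp
  qed
qed

lemma inv_eta:
  assumes L: "ln (real n) > 0" and S: "0 \<le> S"
  shows "1 / ml_eta n S \<le> 2 + sqrt ((1 + S) / ln (real n))"
proof -
  define a where "a = sqrt (ln (real n) / (1 + S))"
  have a: "a > 0" using L S by (simp add: a_def)
  have ia: "1 / a = sqrt ((1 + S) / ln (real n))" using L S
    by (simp add: a_def real_sqrt_divide)
  show ?thesis
  proof (cases "a \<le> 1/2")
    case True
    hence "ml_eta n S = a" by (simp add: ml_eta_def a_def)
    thus ?thesis using ia by simp
  next
    case False
    hence e: "ml_eta n S = 1/2" by (simp add: ml_eta_def a_def)
    show ?thesis unfolding e using S L by simp
  qed
qed

lemma tele_step1:
  fixes s x :: real assumes "0 \<le> s" "0 \<le> x" "x \<le> 1"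
  shows "x / (1 + s) \<le> (1 / (1 + s) - 1 / (1 + (s + x))) + (ln (1 + (s + x)) - ln (1 + s))"
proof -
  have p: "1 + s > 0" "1 + s + x > 0" using assms by auto
  have "ln ((1 + s) / (1 + s + x)) \<le> (1 + s) / (1 + s + x) - 1"
    by (rule ln_le_minus_one) (use p in simp)
  hence l: "x / (1 + s + x) \<le> ln (1 + s + x) - ln (1 + s)" using p
    by (simp add: ln_div field_simps)
  have "x / (1 + s) - x / (1 + s + x) = x * x / ((1 + s) * (1 + s + x))" using p
    by (simp add: field_simps)
  also have "\<dots> \<le> x / ((1 + s) * (1 + s + x))" using assms p
    by (intro divide_right_mono) (auto simp: mult_left_le)
  also have "\<dots> = 1 / (1 + s) - 1 / (1 + (s + x))" using p by (simp add: field_simps)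
  finally show ?thesis using l by (simp add: add.assoc)
qed

lemma tele_step2:
  fixes s x :: real assumes "0 \<le> s" "0 \<le> x" "x \<le> 1"
  shows "x / sqrt (1 + s) \<le> 2 * (sqrt (s + x) - sqrt s)"
proof (cases "x = 0")
  case True thus ?thesis by simp
next
  case False
  hence xp: "x > 0" using assms by simp
  have q: "sqrt (s + x) > 0" using assms xp by simp
  have d: "sqrt (s + x) - sqrt s = x / (sqrt (s + x) + sqrt s)"
  proof -
    have "(sqrt (s + x) - sqrt s) * (sqrt (s + x) + sqrt s) = x"
      using assms by (simp add: algebra_simps)
    moreover have "sqrt (s + x) + sqrt s \<noteq> 0" using q assms
      by (metis add_pos_nonneg less_irrefl real_sqrt_ge_zero)
    ultimately show ?thesis by (simp add: eq_divide_eq)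
  qed
  have "sqrt (s + x) + sqrt s \<le> 2 * sqrt (1 + s)"
    using assms by (intro add_mono[of _ "sqrt (1+s)" _ "sqrt (1+s)", simplified] real_sqrt_le_mono) auto
  hence "x / (2 * sqrt (1 + s)) \<le> x / (sqrt (s + x) + sqrt s)"
    using xp q assms by (intro divide_left_mono) (auto intro!: mult_pos_pos add_pos_nonneg)
  thus ?thesis using d by (simp add: field_simps)
qed

lemma ratio_step:
  assumes L: "ln (real n) > 0" and "0 \<le> s" "0 \<le> x" "x \<le> 1"
  shows "ml_eta n s / ml_eta n (s + x) - 1 \<le> (x / (1 + s)) / 2"
proof -
  define u where "u = (1 + (s + x)) / (1 + s)"
  have "ml_eta n s / ml_eta n (s + x) \<le> sqrt u" unfolding u_def
    by (rule eta_ratio) (use assms in auto)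
  also have "sqrt u \<le> (u + 1) / 2"
  proof -
    have "0 \<le> (sqrt u - 1)\<^sup>2" by simp
    moreover have "u \<ge> 0" using assms by (simp add: u_def)
    ultimately show ?thesis by (simp add: power2_diff)
  qed
  finally have "ml_eta n s / ml_eta n (s + x) - 1 \<le> (u - 1) / 2" by simp
  also have "u - 1 = x / (1 + s)" using assms by (simp add: u_def field_simps)
  finally show ?thesis .
qed

locale mlp =
  fixes E :: "'e set" and w S L :: "nat \<Rightarrow> 'e \<Rightarrow> real" and lb :: "nat \<Rightarrow> real"
  assumes fin: "finite E" and card2: "2 \<le> card E"
  and w0: "\<And>i. w 0 i = 1 / real (card E)"
  and S0: "\<And>i. S 0 i = 0"
  and Lb: "\<And>t i. (\<forall>j\<in>E. w t j > 0) \<Longrightarrow> i \<in> E \<Longrightarrow> 0 \<le> L t i \<and> L t i \<le> 1"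
  and lb_def: "\<And>t. lb t = (\<Sum>j\<in>E. ml_prob E (w t) (S t) j * L t j)"
  and Sstep: "\<And>t i. S (Suc t) i = S t i + (lb t - L t i)\<^sup>2"
  and wstep: "\<And>t i. w (Suc t) i = (w t i * (1 + ml_eta (card E) (S t i) * (lb t - L t i)))
                 powr (ml_eta (card E) (S (Suc t) i) / ml_eta (card E) (S t i))"
begin

abbreviation "n \<equiv> card E"
abbreviation "eta t i \<equiv> ml_eta n (S t i)"

lemma Ln: "ln (real n) > 0"
  using card2 by simp

lemma Ene: "E \<noteq> {}" using card2 by auto

lemma S_nonneg: "0 \<le> S t i"
  by (induction t) (auto simp: S0 Sstep)

lemma eta_pos': "0 < eta t i" using eta_pos[OF Ln S_nonneg] .

lemma S_mono: "S t i \<le> S (Suc t) i" by (simp add: Sstep)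

lemma prob:
  assumes wp: "\<forall>j\<in>E. w t j > 0"
  shows "\<forall>i\<in>E. 0 \<le> ml_prob E (w t) (S t) i" "(\<Sum>i\<in>E. ml_prob E (w t) (S t) i) = 1"
proof -
  define Z where "Z = (\<Sum>j\<in>E. eta t j * w t j)"
  have Z: "Z > 0" unfolding Z_def using fin Ene wp eta_pos'
    by (intro sum_pos) (auto intro: mult_pos_pos)
  have pe: "ml_prob E (w t) (S t) i = eta t i * w t i / Z" for i
    by (simp add: ml_prob_def Z_def)
  show "\<forall>i\<in>E. 0 \<le> ml_prob E (w t) (S t) i" unfolding pe using Z wp eta_pos'
    by (auto intro!: divide_nonneg_pos mult_nonneg_nonneg less_imp_le)
  show "(\<Sum>i\<in>E. ml_prob E (w t) (S t) i) = 1" unfolding pe using Z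
    by (simp add: sum_divide_distrib[symmetric] Z_def[symmetric])
qed

lemma lb_bounds:
  assumes wp: "\<forall>j\<in>E. w t j > 0"
  shows "0 \<le> lb t" "lb t \<le> 1"
proof -
  note P = prob[OF wp]
  show "0 \<le> lb t" unfolding lb_def using P Lb[OF wp]
    by (intro sum_nonneg mult_nonneg_nonneg) auto
  have "lb t \<le> (\<Sum>j\<in>E. ml_prob E (w t) (S t) j * 1)" unfolding lb_def using P Lb[OF wp]
    by (intro sum_mono mult_left_mono) auto
  thus "lb t \<le> 1" using P by simp
qed

lemma w_pos: "\<forall>j\<in>E. w t j > 0"
proof (induction t)
  case 0 thus ?case using card2 by (simp add: w0)
next
  case (Suc t)
  show ?case
  proof
    fix i assume i: "i \<in> E"
    have r: "\<bar>lb t - L t i\<bar> \<le> 1" using lb_bounds[OF Suc.IH] Lb[OF Suc.IH i] by auto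
    have "\<bar>eta t i * (lb t - L t i)\<bar> \<le> 1/2 * 1"
      unfolding abs_mult using eta_pos'[of t i] eta_half[of n "S t i"] r
      by (intro mult_mono) auto
    hence h1: "0 < 1 + eta t i * (lb t - L t i)" by auto
    have "0 < w t i" using Suc.IH i by simp
    thus "0 < w (Suc t) i" unfolding wstep using h1 by simp
  qed
qed

lemma r_bound: "i \<in> E \<Longrightarrow> \<bar>lb t - L t i\<bar> \<le> 1"
proof -
  assume i: "i \<in> E"
  have "0 \<le> lb t" "lb t \<le> 1" using lb_bounds[OF w_pos] by auto
  moreover have "0 \<le> L t i \<and> L t i \<le> 1" using Lb[OF w_pos i] .
  ultimately show ?thesis by auto
qed

lemma eta_r: "i \<in> E \<Longrightarrow> \<bar>eta t i * (lb t - L t i)\<bar> \<le> 1/2"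
proof -
  assume i: "i \<in> E"
  have "\<bar>eta t i * (lb t - L t i)\<bar> \<le> 1/2 * 1"
    unfolding abs_mult using eta_pos'[of t i] eta_half[of n "S t i"] r_bound[OF i]
    by (intro mult_mono) auto
  thus ?thesis by simp
qed

lemma zero_sum: "(\<Sum>i\<in>E. eta t i * w t i * (lb t - L t i)) = 0"
proof -
  define Z where "Z = (\<Sum>j\<in>E. eta t j * w t j)"
  have Z: "Z > 0" unfolding Z_def using fin Ene w_pos eta_pos'
    by (intro sum_pos) (auto intro: mult_pos_pos)
  have "lb t = (\<Sum>j\<in>E. eta t j * w t j * L t j) / Z"
    unfolding lb_def ml_prob_def Z_def[symmetric] by (simp add: sum_divide_distrib)
  hence "lb t * Z = (\<Sum>j\<in>E. eta t j * w t j * L t j)" using Z by simp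
  moreover have "(\<Sum>i\<in>E. eta t i * w t i * (lb t - L t i)) =
      lb t * Z - (\<Sum>j\<in>E. eta t j * w t j * L t j)"
    unfolding Z_def by (simp add: algebra_simps sum_subtractf sum_distrib_left)
  ultimately show ?thesis by simp
qed

lemma W_step:
  "(\<Sum>i\<in>E. w (Suc t) i) \<le> (\<Sum>i\<in>E. w t i) + (\<Sum>i\<in>E. (eta t i / eta (Suc t) i - 1) / exp 1)"
proof -
  have each: "w (Suc t) i \<le> (w t i + eta t i * w t i * (lb t - L t i)) + (eta t i / eta (Suc t) i - 1) / exp 1"
    if i: "i \<in> E" for i
  proof -
    define y where "y = w t i * (1 + eta t i * (lb t - L t i))"
    have "\<bar>eta t i * (lb t - L t i)\<bar> \<le> 1/2" using eta_r[OF i] .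
    hence "0 < 1 + eta t i * (lb t - L t i)" by (simp add: abs_le_iff)
    hence y: "y > 0" using w_pos i by (simp add: y_def)
    have a1: "eta (Suc t) i / eta t i \<le> 1" using eta_pos'[of t i]
      eta_anti[OF Ln S_nonneg S_mono, of t i] by simp
    have a0: "0 < eta (Suc t) i / eta t i" using eta_pos'[of t i] eta_pos'[of "Suc t" i] by simp
    have "w (Suc t) i = y powr (eta (Suc t) i / eta t i)" by (simp add: wstep y_def)
    also have "\<dots> \<le> y + (1 / (eta (Suc t) i / eta t i) - 1) / exp 1" by (rule young_powr[OF y a0 a1])
    also have "\<dots> = (w t i + eta t i * w t i * (lb t - L t i)) + (eta t i / eta (Suc t) i - 1) / exp 1"
      by (simp add: y_def algebra_simps)
    finally show ?thesis .
  qed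
  have "(\<Sum>i\<in>E. w (Suc t) i) \<le> (\<Sum>i\<in>E. (w t i + eta t i * w t i * (lb t - L t i)) + (eta t i / eta (Suc t) i - 1) / exp 1)"
    by (rule sum_mono) (rule each)
  also have "\<dots> = (\<Sum>i\<in>E. w t i) + (\<Sum>i\<in>E. eta t i * w t i * (lb t - L t i)) + (\<Sum>i\<in>E. (eta t i / eta (Suc t) i - 1) / exp 1)"
    by (simp add: sum.distrib)
  finally show ?thesis using zero_sum by simp
qed

lemma W_bound:
  "(\<Sum>i\<in>E. w T i) \<le> 1 + (\<Sum>t<T. \<Sum>i\<in>E. (eta t i / eta (Suc t) i - 1) / exp 1)"
proof (induction T)
  case 0 show ?case using card2 by (simp add: w0)
next
  case (Suc T) thus ?case using W_step[of T] by simp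
qed

lemma x_le: "i \<in> E \<Longrightarrow> (lb t - L t i)\<^sup>2 \<le> 1"
proof -
  assume i: "i \<in> E"
  have "\<bar>lb t - L t i\<bar> * \<bar>lb t - L t i\<bar> \<le> 1 * 1" using r_bound[OF i]
    by (intro mult_mono) auto
  thus ?thesis by (simp add: power2_eq_square)
qed

lemma S_le: "i \<in> E \<Longrightarrow> S t i \<le> real t"
proof (induction t)
  case 0 thus ?case by (simp add: S0)
next
  case (Suc t)
  have "(lb t - L t i)\<^sup>2 \<le> 1" using x_le[OF Suc.prems] .
  thus ?case using Suc by (simp add: Sstep)
qed

lemma ratio_sum:
  assumes i: "i \<in> E"
  shows "(\<Sum>t<T. eta t i / eta (Suc t) i - 1) \<le> (1 + ln (real T + 1)) / 2"
proof -
  define f where "f t = - 1 / (1 + S t i) + ln (1 + S t i)" for t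
  have "(\<Sum>t<T. eta t i / eta (Suc t) i - 1) \<le> (\<Sum>t<T. (f (Suc t) - f t) / 2)"
  proof (rule sum_mono)
    fix t
    have x: "0 \<le> (lb t - L t i)\<^sup>2" "(lb t - L t i)\<^sup>2 \<le> 1" using x_le[OF i] by auto
    have "eta t i / eta (Suc t) i - 1 \<le> ((lb t - L t i)\<^sup>2 / (1 + S t i)) / 2"
      unfolding Sstep by (rule ratio_step[OF Ln S_nonneg x])
    also have "\<dots> \<le> (f (Suc t) - f t) / 2"
    proof (rule divide_right_mono)
      show "(lb t - L t i)\<^sup>2 / (1 + S t i) \<le> f (Suc t) - f t"
        using tele_step1[OF S_nonneg x, of t i] by (simp add: f_def Sstep)
    qed simp
    finally show "eta t i / eta (Suc t) i - 1 \<le> (f (Suc t) - f t) / 2" .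
  qed
  also have "\<dots> = (f T - f 0) / 2"
    by (simp add: sum_divide_distrib[symmetric] sum_lessThan_telescope)
  also have "\<dots> \<le> (1 + ln (real T + 1)) / 2"
  proof -
    have a: "0 \<le> 1 / (1 + S T i)" using S_nonneg[of T i] by simp
    have b: "ln (1 + S T i) \<le> ln (real T + 1)" using S_nonneg[of T i] S_le[OF i, of T] by simp
    have "f T - f 0 = ln (1 + S T i) - 1 / (1 + S T i) + 1" by (simp add: f_def S0)
    hence "f T - f 0 \<le> 1 + ln (real T + 1)" using a b by linarith
    thus ?thesis by (simp add: divide_right_mono)
  qed
  finally show ?thesis .
qed

definition "Bnd T = 1 + real n / (2 * exp 1) * (1 + ln (real T + 1))"

lemma W_final: "(\<Sum>i\<in>E. w T i) \<le> Bnd T"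
proof -
  have "(\<Sum>t<T. \<Sum>i\<in>E. (eta t i / eta (Suc t) i - 1) / exp 1)
      = (\<Sum>i\<in>E. (\<Sum>t<T. eta t i / eta (Suc t) i - 1)) / exp 1"
    by (simp add: sum.swap[of _ "{..<T}"] sum_divide_distrib)
  also have "\<dots> \<le> (\<Sum>i\<in>E. (1 + ln (real T + 1)) / 2) / exp 1"
    by (intro divide_right_mono sum_mono ratio_sum) auto
  also have "\<dots> = real n / (2 * exp 1) * (1 + ln (real T + 1))" by simp
  finally show ?thesis using W_bound[of T] unfolding Bnd_def by simp
qed

lemma log_inv:
  assumes i: "i \<in> E"
  shows "- ln (real n) / eta 0 i + (\<Sum>s<t. (lb s - L s i) - eta s i * (lb s - L s i)\<^sup>2)
           \<le> ln (w t i) / eta t i"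
proof (induction t)
  case 0 show ?case using card2 by (simp add: w0 ln_div)
next
  case (Suc t)
  define r where "r = lb t - L t i"
  have z: "\<bar>eta t i * r\<bar> \<le> 1/2" using eta_r[OF i] by (simp add: r_def)
  hence zp: "0 < 1 + eta t i * r" by (simp add: abs_le_iff)
  have wp: "0 < w t i" using w_pos i by simp
  have ep: "0 < eta t i" "0 < eta (Suc t) i" using eta_pos' by auto
  have lm: "ln (w t i * (1 + eta t i * r)) = ln (w t i) + ln (1 + eta t i * r)"
    using wp zp by (simp add: ln_mult)
  have "ln (w (Suc t) i) = eta (Suc t) i / eta t i * ln (w t i * (1 + eta t i * r))"
    unfolding wstep r_def by simp
  hence "ln (w (Suc t) i) = eta (Suc t) i / eta t i * (ln (w t i) + ln (1 + eta t i * r))"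
    using lm by simp
  hence e: "ln (w (Suc t) i) / eta (Suc t) i = ln (w t i) / eta t i + ln (1 + eta t i * r) / eta t i"
    using ep by (simp add: field_simps)
  have "eta t i * r - (eta t i * r)\<^sup>2 \<le> ln (1 + eta t i * r)"
    by (rule ln_one_plus_lb) (use z in \<open>auto simp: abs_le_iff\<close>)
  hence "(eta t i * r - (eta t i * r)\<^sup>2) / eta t i \<le> ln (1 + eta t i * r) / eta t i"
    using ep by (simp add: divide_right_mono)
  moreover have "(eta t i * r - (eta t i * r)\<^sup>2) / eta t i = r - eta t i * r\<^sup>2"
    using ep by (simp add: field_simps power2_eq_square)
  ultimately have "r - eta t i * r\<^sup>2 \<le> ln (1 + eta t i * r) / eta t i" by simp
  thus ?case using Suc.IH e by (simp add: r_def)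
qed

lemma Q_bound:
  assumes i: "i \<in> E"
  shows "(\<Sum>s<T. eta s i * (lb s - L s i)\<^sup>2) \<le> 2 * sqrt (ln (real n)) * sqrt (S T i)"
proof -
  have "(\<Sum>s<T. eta s i * (lb s - L s i)\<^sup>2)
      \<le> (\<Sum>s<T. sqrt (ln (real n)) * (2 * (sqrt (S (Suc s) i) - sqrt (S s i))))"
  proof (rule sum_mono)
    fix s
    have x: "0 \<le> (lb s - L s i)\<^sup>2" "(lb s - L s i)\<^sup>2 \<le> 1" using x_le[OF i] by auto
    have "eta s i * (lb s - L s i)\<^sup>2 \<le> sqrt (ln (real n) / (1 + S s i)) * (lb s - L s i)\<^sup>2"
      by (intro mult_right_mono eta_sqrt) simp
    also have "\<dots> = sqrt (ln (real n)) * ((lb s - L s i)\<^sup>2 / sqrt (1 + S s i))"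
      by (simp add: real_sqrt_divide)
    also have "\<dots> \<le> sqrt (ln (real n)) * (2 * (sqrt (S (Suc s) i) - sqrt (S s i)))"
      using tele_step2[OF S_nonneg x, of s i] Ln by (intro mult_left_mono) (auto simp: Sstep)
    finally show "eta s i * (lb s - L s i)\<^sup>2 \<le> sqrt (ln (real n)) * (2 * (sqrt (S (Suc s) i) - sqrt (S s i)))" .
  qed
  also have "\<dots> = 2 * sqrt (ln (real n)) * (\<Sum>s<T. sqrt (S (Suc s) i) - sqrt (S s i))"
    by (simp add: sum_distrib_left algebra_simps)
  also have "\<dots> = 2 * sqrt (ln (real n)) * sqrt (S T i)"
    using sum_lessThan_telescope[of "\<lambda>s. sqrt (S s i)" T] by (simp add: S0)
  finally show ?thesis .
qed

lemma regret_bound: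
  assumes k: "k \<in> E"
  shows "(\<Sum>t<T. lb t - L t k) \<le> usc_Gamma n T * (2 + 1 / sqrt (ln (real n)))
           + usc_Gamma n T / sqrt (ln (real n)) * sqrt (S T k)"
proof -
  define q where "q = sqrt (ln (real n))"
  define lB where "lB = ln (Bnd T)"
  define sS where "sS = sqrt (S T k)"
  define Q where "Q = (\<Sum>s<T. eta s k * (lb s - L s k)\<^sup>2)"
  have q: "q > 0" using Ln by (simp add: q_def)
  have Lq: "ln (real n) = q\<^sup>2" using Ln by (simp add: q_def)
  have sS: "sS \<ge> 0" using S_nonneg[of T k] by (simp add: sS_def)
  have G: "usc_Gamma n T = 3 * q\<^sup>2 + lB"
    by (simp add: usc_Gamma_def lB_def Bnd_def Lq)
  have B1: "Bnd T \<ge> 1" unfolding Bnd_def by (intro add_increasing2 mult_nonneg_nonneg) auto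
  hence lB: "lB \<ge> 0" by (simp add: lB_def)
  have "w T k \<le> sum (w T) E"
    by (rule member_le_sum[OF k]) (use w_pos fin in \<open>auto intro: less_imp_le\<close>)
  hence wk: "w T k \<le> Bnd T" using W_final[of T] by simp
  have wkp: "0 < w T k" using w_pos k by simp
  have lwk: "ln (w T k) \<le> lB" using wk wkp B1 by (simp add: lB_def)
  have li: "- ln (real n) / eta 0 k + ((\<Sum>t<T. lb t - L t k) - Q) \<le> ln (w T k) / eta T k"
    using log_inv[OF k, of T] by (simp add: Q_def sum_subtractf)
  have "ln (w T k) / eta T k \<le> lB / eta T k"
    using lwk eta_pos'[of T k] by (simp add: divide_right_mono)
  also have "\<dots> = lB * (1 / eta T k)" by simp
  also have "\<dots> \<le> lB * (2 + sqrt ((1 + S T k) / ln (real n)))"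
    by (intro mult_left_mono inv_eta[OF Ln S_nonneg] lB)
  also have "sqrt ((1 + S T k) / ln (real n)) \<le> (1 + sS) / q"
  proof -
    have "sqrt (1 + S T k) \<le> 1 + sS"
    proof -
      have "1 + S T k \<le> (1 + sS)\<^sup>2" using S_nonneg[of T k] sS
        by (simp add: sS_def power2_eq_square algebra_simps)
      hence "sqrt (1 + S T k) \<le> sqrt ((1 + sS)\<^sup>2)" by (rule real_sqrt_le_mono)
      thus ?thesis using sS by simp
    qed
    thus ?thesis using q by (simp add: real_sqrt_divide q_def divide_right_mono)
  qed
  hence "lB * (2 + sqrt ((1 + S T k) / ln (real n))) \<le> lB * (2 + (1 + sS) / q)"
    using lB by (intro mult_left_mono) auto
  finally have A: "ln (w T k) / eta T k \<le> lB * (2 + (1 + sS) / q)" .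
  have "ln (real n) / eta 0 k = ln (real n) * (1 / eta 0 k)" by simp
  also have "\<dots> \<le> ln (real n) * (2 + sqrt ((1 + S 0 k) / ln (real n)))"
    using Ln by (intro mult_left_mono inv_eta[OF Ln S_nonneg]) auto
  also have "\<dots> = q\<^sup>2 * (2 + 1 / q)" using q by (simp add: S0 Lq real_sqrt_divide)
  finally have Bb: "ln (real n) / eta 0 k \<le> q\<^sup>2 * (2 + 1 / q)" .
  have C: "Q \<le> 2 * q * sS" using Q_bound[OF k, of T] by (simp add: Q_def q_def sS_def)
  have sumr: "(\<Sum>t<T. lb t - L t k) \<le> lB * (2 + (1 + sS) / q) + q\<^sup>2 * (2 + 1 / q) + 2 * q * sS"
    using li A Bb C by (simp add: field_simps)
  have e1: "lB * (2 + (1 + sS) / q) + q\<^sup>2 * (2 + 1 / q) + 2 * q * sS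
      = 2 * lB + lB / q + lB * sS / q + 2 * q\<^sup>2 + q + 2 * q * sS"
    using q by (simp add: field_simps power2_eq_square)
  have e2: "(3 * q\<^sup>2 + lB) * (2 + 1 / q) + (3 * q\<^sup>2 + lB) / q * sS
      = 6 * q\<^sup>2 + 3 * q + 2 * lB + lB / q + 3 * q * sS + lB * sS / q"
    using q by (simp add: field_simps power2_eq_square)
  have "0 \<le> q * sS" using q sS by simp
  hence "(\<Sum>t<T. lb t - L t k) \<le> (3 * q\<^sup>2 + lB) * (2 + 1 / q) + (3 * q\<^sup>2 + lB) / q * sS"
    using sumr e1 e2 q \<open>0 \<le> q * sS\<close> zero_le_power2[of q] by linarith
  thus ?thesis by (simp add: G q_def sS_def)
qed

end


primrec mlst :: "'e set \<Rightarrow> (nat \<Rightarrow> ('e \<Rightarrow> real) \<Rightarrow> ('e \<Rightarrow> real) \<Rightarrow> 'e \<Rightarrow> real) \<Rightarrow> nat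
    \<Rightarrow> ('e \<Rightarrow> real) \<times> ('e \<Rightarrow> real)" where
  "mlst E Lf 0 = ((\<lambda>i. 1 / real (card E)), (\<lambda>i. 0))"
| "mlst E Lf (Suc t) =
     (let (w, S) = mlst E Lf t;
          n = card E;
          li = Lf t w S;
          l = (\<Sum>i\<in>E. ml_prob E w S i * li i);
          S' = (\<lambda>i. S i + (l - li i)\<^sup>2);
          w' = (\<lambda>i. (w i * (1 + ml_eta n (S i) * (l - li i)))
                       powr (ml_eta n (S' i) / ml_eta n (S i)))
      in (w', S'))"

lemma mlst_S_nonneg: "0 \<le> snd (mlst E Lf t) i"
  by (induction t) (auto simp: Let_def case_prod_unfold)

lemma mlst_mlp:
  assumes "finite E" "2 \<le> card E"
    and Lf: "\<And>t w S i. (\<forall>j\<in>E. w j > 0) \<Longrightarrow> (\<forall>j. S j \<ge> 0) \<Longrightarrow> i \<in> E \<Longrightarrow> 0 \<le> Lf t w S i \<and> Lf t w S i \<le> 1"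
  shows "mlp E (\<lambda>t. fst (mlst E Lf t)) (\<lambda>t. snd (mlst E Lf t))
     (\<lambda>t. Lf t (fst (mlst E Lf t)) (snd (mlst E Lf t)))
     (\<lambda>t. \<Sum>j\<in>E. ml_prob E (fst (mlst E Lf t)) (snd (mlst E Lf t)) j * Lf t (fst (mlst E Lf t)) (snd (mlst E Lf t)) j)"
proof
  show "finite E" "2 \<le> card E" by fact+
  show "\<And>t i. (\<forall>j\<in>E. 0 < fst (mlst E Lf t) j) \<Longrightarrow> i \<in> E \<Longrightarrow>
      0 \<le> Lf t (fst (mlst E Lf t)) (snd (mlst E Lf t)) i \<and> Lf t (fst (mlst E Lf t)) (snd (mlst E Lf t)) i \<le> 1"
  proof -
    fix t i assume h1: "\<forall>j\<in>E. 0 < fst (mlst E Lf t) j" and h3: "i \<in> E"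
    have h2: "\<forall>j. 0 \<le> snd (mlst E Lf t) j" by (intro allI mlst_S_nonneg)
    show "0 \<le> Lf t (fst (mlst E Lf t)) (snd (mlst E Lf t)) i \<and> Lf t (fst (mlst E Lf t)) (snd (mlst E Lf t)) i \<le> 1"
      by (rule Lf[OF h1 h2 h3])
  qed
next
  show "\<And>i. fst (mlst E Lf 0) i = 1 / real (card E)" by simp
  show "\<And>i. snd (mlst E Lf 0) i = 0" by simp
next
  fix t show "(\<Sum>j\<in>E. ml_prob E (fst (mlst E Lf t)) (snd (mlst E Lf t)) j * Lf t (fst (mlst E Lf t)) (snd (mlst E Lf t)) j) =
         (\<Sum>j\<in>E. ml_prob E (fst (mlst E Lf t)) (snd (mlst E Lf t)) j * Lf t (fst (mlst E Lf t)) (snd (mlst E Lf t)) j)" by (rule refl)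
next
  fix t i
  obtain w S where ws: "mlst E Lf t = (w, S)" by (cases "mlst E Lf t")
  show "snd (mlst E Lf (Suc t)) i = snd (mlst E Lf t) i + ((\<Sum>j\<in>E. ml_prob E (fst (mlst E Lf t)) (snd (mlst E Lf t)) j * Lf t (fst (mlst E Lf t)) (snd (mlst E Lf t)) j) - Lf t (fst (mlst E Lf t)) (snd (mlst E Lf t)) i)\<^sup>2"
    by (simp add: ws Let_def)
next
  fix t i
  obtain w S where ws: "mlst E Lf t = (w, S)" by (cases "mlst E Lf t")
  show "fst (mlst E Lf (Suc t)) i =
       (fst (mlst E Lf t) i * (1 + ml_eta (card E) (snd (mlst E Lf t) i) * ((\<Sum>j\<in>E. ml_prob E (fst (mlst E Lf t)) (snd (mlst E Lf t)) j * Lf t (fst (mlst E Lf t)) (snd (mlst E Lf t)) j) - Lf t (fst (mlst E Lf t)) (snd (mlst E Lf t)) i))) powr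
       (ml_eta (card E) (snd (mlst E Lf (Suc t)) i) / ml_eta (card E) (snd (mlst E Lf t) i))"
    by (simp add: ws Let_def)
qed

lemma usc_state_mlst:
  fixes E :: "'e set" and out :: "'e \<Rightarrow> nat \<Rightarrow> 'a::real_inner" and g :: "nat \<Rightarrow> 'a \<Rightarrow> 'a"
    and G D :: real and xb :: 'a and T :: nat
  assumes Lf_def: "Lf = (\<lambda>t w S. if t < T then (\<lambda>i. usc_loss G D xb (g (Suc t) (ml_combine E out w S (Suc t))) (out i (Suc t))) else (\<lambda>i. 0))"
  shows "t \<le> T \<Longrightarrow> usc_state E out g G D xb t = mlst E Lf t"
proof (induction t)
  case 0 thus ?case by simp
next
  case (Suc t)
  hence IH: "usc_state E out g G D xb t = mlst E Lf t" and tT: "t < T" by auto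
  obtain w S where ws: "mlst E Lf t = (w, S)" by (cases "mlst E Lf t")
  show ?case using tT by (simp add: IH ws Lf_def Let_def)
qed


lemma prob_gen:
  assumes fin: "finite E" and c2: "2 \<le> card E" and wp: "\<forall>j\<in>E. w j > 0" and Sp: "\<forall>j. S j \<ge> 0"
  shows "\<forall>i\<in>E. 0 \<le> ml_prob E w S i" "(\<Sum>i\<in>E. ml_prob E w S i) = 1"
proof -
  have Ln: "ln (real (card E)) > 0" using c2 by simp
  have Ene: "E \<noteq> {}" using c2 by auto
  define Z where "Z = (\<Sum>j\<in>E. ml_eta (card E) (S j) * w j)"
  have Z: "Z > 0" unfolding Z_def using fin Ene wp eta_pos[OF Ln] Sp
    by (intro sum_pos) (auto intro: mult_pos_pos)
  have pe: "ml_prob E w S i = ml_eta (card E) (S i) * w i / Z" for i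
    by (simp add: ml_prob_def Z_def)
  show "\<forall>i\<in>E. 0 \<le> ml_prob E w S i" unfolding pe using Z wp eta_pos[OF Ln] Sp
    by (auto intro!: divide_nonneg_pos mult_nonneg_nonneg less_imp_le)
  show "(\<Sum>i\<in>E. ml_prob E w S i) = 1" unfolding pe using Z
    by (simp add: sum_divide_distrib[symmetric] Z_def[symmetric])
qed

lemma Pgrid_eq: "Pgrid T = (\<lambda>k. 2 ^ k / real T) ` {..nat \<lceil>log 2 (real T)\<rceil>}"
  unfolding Pgrid_def by auto

lemma Pgrid_finite: "finite (Pgrid T)"
  unfolding Pgrid_eq by simp

lemma Pgrid_pos: "T > 0 \<Longrightarrow> l \<in> Pgrid T \<Longrightarrow> l > 0"
  unfolding Pgrid_def by auto

lemma experts_finite: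
  assumes "finite Astr" "finite Aexp" "finite Acon"
  shows "finite (usc_experts Astr Aexp Acon T)"
proof -
  have "usc_experts Astr Aexp Acon T \<subseteq>
    (\<lambda>(A, l). EStr A l) ` (Astr \<times> Pgrid T) \<union> (\<lambda>(A, l). EExp A l) ` (Aexp \<times> Pgrid T) \<union> ECon ` Acon"
    unfolding usc_experts_def by auto
  moreover have "finite ((\<lambda>(A, l). EStr A l) ` (Astr \<times> Pgrid T) \<union> (\<lambda>(A, l). EExp A l) ` (Aexp \<times> Pgrid T) \<union> ECon ` Acon)"
    using assms Pgrid_finite by auto
  ultimately show ?thesis by (rule finite_subset)
qed

lemma experts_card:
  assumes "finite Astr" "finite Aexp" "finite Acon" "Astr \<noteq> {}" "T \<ge> 2"
  shows "2 \<le> card (usc_experts Astr Aexp Acon T)"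
proof -
  obtain A where A: "A \<in> Astr" using assms by auto
  have "log 2 (real T) \<ge> 1" using assms by simp
  hence N: "1 \<le> nat \<lceil>log 2 (real T)\<rceil>" by linarith
  have "1 / real T \<in> Pgrid T" unfolding Pgrid_def by (rule CollectI, rule exI[of _ 0]) simp
  moreover have "2 / real T \<in> Pgrid T" unfolding Pgrid_def using N by (intro CollectI exI[of _ 1]) simp
  ultimately have sub: "{EStr A (1 / real T), EStr A (2 / real T)} \<subseteq> usc_experts Astr Aexp Acon T"
    using A unfolding usc_experts_def by auto
  have "EStr A (1 / real T) \<noteq> EStr A (2 / real T)" using assms by (simp add: divide_right_mono)
  hence "card {EStr A (1 / real T), EStr A (2 / real T)} = 2" by simp
  thus ?thesis using card_mono[OF experts_finite[OF assms(1-3)] sub] by simp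
qed

lemma experts_out:
  assumes "i \<in> usc_experts Astr Aexp Acon T" "T > 0" "1 \<le> t"
    "\<forall>A\<in>Astr. \<forall>l>0. is_online_alg X (A l)"
    "\<forall>A\<in>Aexp. \<forall>a>0. is_online_alg X (A a)"
    "\<forall>A\<in>Acon. is_online_alg X A"
  shows "expert_out i F t \<in> X"
  using assms Pgrid_pos[OF assms(2)] unfolding usc_experts_def is_online_alg_def by auto

lemma lh_exists:
  assumes "T \<ge> 2" "1 / real T \<le> lam" "lam \<le> 1"
  shows "\<exists>lh\<in>Pgrid T. lh \<le> lam \<and> lam \<le> 2 * lh"
proof -
  have T0: "real T > 0" using assms by simp
  have lt: "lam * real T \<ge> 1" using assms T0 by (simp add: field_simps)
  define m where "m = \<lfloor>log 2 (lam * real T)\<rfloor>"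
  have m0: "m \<ge> 0" unfolding m_def using lt by simp
  define k where "k = nat m"
  have km: "real k = real_of_int m" using m0 by (simp add: k_def)
  have "2 powr real k \<le> 2 powr log 2 (lam * real T)"
    unfolding km m_def by (intro powr_mono) auto
  hence k1: "2 ^ k \<le> lam * real T" using lt by (simp add: powr_realpow)
  have "2 powr log 2 (lam * real T) < 2 powr (real k + 1)"
    unfolding km m_def by (intro powr_less_mono) auto
  hence k2: "lam * real T < 2 * 2 ^ k" using lt by (simp add: powr_add powr_realpow)
  have "log 2 (lam * real T) \<le> log 2 (real T)" using lt assms T0 by simp
  hence "m \<le> \<lceil>log 2 (real T)\<rceil>" unfolding m_def by linarith
  hence kN: "k \<le> nat \<lceil>log 2 (real T)\<rceil>" unfolding k_def by linarith
  show ?thesis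
  proof (intro bexI conjI)
    show "2 ^ k / real T \<in> Pgrid T" unfolding Pgrid_def using kN by blast
    show "2 ^ k / real T \<le> lam" using k1 T0 by (simp add: field_simps)
    show "lam \<le> 2 * (2 ^ k / real T)" using k2 T0 by (simp add: field_simps)
  qed
qed

lemma loss_bounds:
  fixes gr y xb :: "'a::real_inner"
  assumes "norm gr \<le> G" "dist y xb \<le> D" "G > 0" "D > 0"
  shows "0 \<le> usc_loss G D xb gr y" "usc_loss G D xb gr y \<le> 1"
proof -
  have "\<bar>gr \<bullet> (y - xb)\<bar> \<le> norm gr * norm (y - xb)" by (rule Cauchy_Schwarz_ineq2)
  also have "\<dots> \<le> G * D" using assms by (intro mult_mono) (auto simp: dist_norm)
  finally have h: "\<bar>gr \<bullet> (y - xb)\<bar> \<le> G * D" .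
  have p: "2 * G * D > 0" using assms by simp
  show "0 \<le> usc_loss G D xb gr y" unfolding usc_loss_def using h p by (intro divide_nonneg_pos) auto
  show "usc_loss G D xb gr y \<le> 1" unfolding usc_loss_def using h p by (simp add: divide_le_eq_1 abs_le_iff mult.commute)
qed



lemma sum_shift1: "(\<Sum>t=1..T. f t) = (\<Sum>t<T. f (Suc t) :: real)"
  by (induction T) auto

lemma amgm: fixes a b lam :: real assumes "lam > 0" shows "a * b \<le> a\<^sup>2 / (2 * lam) + lam * b\<^sup>2 / 2"
proof -
  have "0 \<le> (a - lam * b)\<^sup>2" by simp
  hence "2 * lam * (a * b) \<le> a\<^sup>2 + lam\<^sup>2 * b\<^sup>2" by (simp add: power2_diff power_mult_distrib algebra_simps)
  thus ?thesis using assms by (simp add: field_simps power2_eq_square)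
qed

lemma lin_loss:
  fixes ov :: "'e \<Rightarrow> 'a::real_inner"
  assumes "finite E" "(\<Sum>j\<in>E. p j) = 1"
  shows "(\<Sum>j\<in>E. p j * usc_loss G D xb gr (ov j)) = usc_loss G D xb gr (\<Sum>j\<in>E. p j *\<^sub>R ov j)"
proof -
  have "(\<Sum>j\<in>E. p j * usc_loss G D xb gr (ov j))
      = (\<Sum>j\<in>E. p j * (gr \<bullet> ov j) + p j * (G * D - gr \<bullet> xb)) / (2 * G * D)"
    unfolding usc_loss_def sum_divide_distrib
    by (intro sum.cong refl) (simp add: inner_diff_right algebra_simps)
  also have "\<dots> = ((\<Sum>j\<in>E. p j * (gr \<bullet> ov j)) + (\<Sum>j\<in>E. p j) * (G * D - gr \<bullet> xb)) / (2 * G * D)"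
    by (simp add: sum.distrib sum_distrib_right)
  also have "\<dots> = usc_loss G D xb gr (\<Sum>j\<in>E. p j *\<^sub>R ov j)"
    unfolding usc_loss_def using assms by (simp add: inner_diff_right inner_sum_right)
  finally show ?thesis .
qed

lemma loss_diff: "G * D \<noteq> 0 \<Longrightarrow> usc_loss G D xb gr x - usc_loss G D xb gr y = gr \<bullet> (x - y) / (2 * G * D)"
  unfolding usc_loss_def by (simp add: inner_diff_right diff_divide_distrib[symmetric])

theorem theorem1:
  fixes X :: "'a::euclidean_space set"
    and D G lam :: real and T :: nat
    and F :: "'a fseq" and gF :: "nat \<Rightarrow> 'a \<Rightarrow> 'a"
    and Astr Aexp :: "'a param_alg set" and Acon :: "'a online_alg set"
    and R :: "'a param_alg \<Rightarrow> real \<Rightarrow> real"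
    and xb :: 'a
  assumes T2: "T \<ge> 2"
    and X: "X \<noteq> {}" "closed X" "convex X" "\<forall>x\<in>X. \<forall>y\<in>X. dist x y \<le> D"
    and GD: "G > 0" "D > 0"
    and setting: "oco_setting X G T F gF"
    and lam: "1 / real T \<le> lam" "lam \<le> 1"
    and strong: "\<forall>t\<in>{1..T}. strongly_convex_grad X (F t) (gF t) lam"
    and algs: "finite Astr" "Astr \<noteq> {}" "finite Aexp" "finite Acon"
      "\<forall>A\<in>Astr. \<forall>l>0. is_online_alg X (A l)"
      "\<forall>A\<in>Aexp. \<forall>a>0. is_online_alg X (A a)"
      "\<forall>A\<in>Acon. is_online_alg X A"
    and Rbound: "\<forall>A\<in>Astr. \<forall>l>0. is_str_regret_bound X G T A l (R A l)"
    and xb: "xb \<in> X"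
  shows "(\<exists>lh\<in>Pgrid T. lh \<le> lam \<and> lam \<le> 2 * lh) \<and>
    (\<forall>lh\<in>Pgrid T. lh \<le> lam \<and> lam \<le> 2 * lh \<longrightarrow>
      (let nE = card (usc_experts Astr Aexp Acon T); \<Gamma> = usc_Gamma nE T in
        regret X T F (USC Astr Aexp Acon T G D xb F gF)
          \<le> Min ((\<lambda>A. R A lh) ` Astr)
             + 2 * \<Gamma> * G * D * (2 + 1 / sqrt (ln (real nE)))
             + \<Gamma>\<^sup>2 * G\<^sup>2 / (2 * lam * ln (real nE))))"
proof (intro conjI ballI impI)
  show "\<exists>lh\<in>Pgrid T. lh \<le> lam \<and> lam \<le> 2 * lh" by (rule lh_exists[OF T2 lam])
next
  fix lh assume lh: "lh \<in> Pgrid T" "lh \<le> lam \<and> lam \<le> 2 * lh"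
  have T0: "T > 0" using T2 by simp
  have lhp: "lh > 0" using Pgrid_pos[OF T0 lh(1)] .
  have lamp: "lam > 0" using lhp lh by simp
  define E where "E = usc_experts Astr Aexp Acon T"
  define out where "out = (\<lambda>i s. expert_out i F s)"
  define Lf where "Lf = (\<lambda>t w S. if t < T then (\<lambda>i. usc_loss G D xb (gF (Suc t) (ml_combine E out w S (Suc t))) (out i (Suc t))) else (\<lambda>i. 0::real))"
  have finE: "finite E" unfolding E_def using experts_finite algs by blast
  have c2: "2 \<le> card E" unfolding E_def using experts_card algs T2 by blast
  have sett: "\<And>t. t \<in> {1..T} \<Longrightarrow> (\<forall>x\<in>X. norm (gF t x) \<le> G)"
    using setting unfolding oco_setting_def by blast
  have outX: "\<And>i t. i \<in> E \<Longrightarrow> 1 \<le> t \<Longrightarrow> out i t \<in> X"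
    unfolding out_def E_def using experts_out algs T0 by blast
  have combX: "ml_combine E out w S t \<in> X"
    if wp: "\<forall>j\<in>E. w j > 0" and Sp: "\<forall>j. S j \<ge> 0" and t: "1 \<le> t" for w S t
    unfolding ml_combine_def
    using prob_gen[OF finE c2 wp Sp] outX[OF _ t] X(3) finE by (intro convex_sum) auto
  have Lf_ok: "0 \<le> Lf t w S i \<and> Lf t w S i \<le> 1"
    if wp: "\<forall>j\<in>E. w j > 0" and Sp: "\<forall>j. S j \<ge> 0" and i: "i \<in> E" for t w S i
  proof (cases "t < T")
    case True
    have xX: "ml_combine E out w S (Suc t) \<in> X" using combX[OF wp Sp] by simp
    have g: "norm (gF (Suc t) (ml_combine E out w S (Suc t))) \<le> G" using sett[of "Suc t"] True xX by auto
    have d: "dist (out i (Suc t)) xb \<le> D" using X(4) outX[OF i] xb by auto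
    show ?thesis using loss_bounds[OF g d GD] True by (simp add: Lf_def)
  qed (simp add: Lf_def)
  interpret m: mlp E "\<lambda>t. fst (mlst E Lf t)" "\<lambda>t. snd (mlst E Lf t)"
     "\<lambda>t. Lf t (fst (mlst E Lf t)) (snd (mlst E Lf t))"
     "\<lambda>t. \<Sum>j\<in>E. ml_prob E (fst (mlst E Lf t)) (snd (mlst E Lf t)) j * Lf t (fst (mlst E Lf t)) (snd (mlst E Lf t)) j"
    by (rule mlst_mlp[OF finE c2 Lf_ok])
  show "let nE = card (usc_experts Astr Aexp Acon T); \<Gamma> = usc_Gamma nE T in
        regret X T F (USC Astr Aexp Acon T G D xb F gF)
          \<le> Min ((\<lambda>A. R A lh) ` Astr)
             + 2 * \<Gamma> * G * D * (2 + 1 / sqrt (ln (real nE)))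
             + \<Gamma>\<^sup>2 * G\<^sup>2 / (2 * lam * ln (real nE))"
  proof -
    define nE where "nE = card E"
    define \<Gamma> where "\<Gamma> = usc_Gamma nE T"
    define q where "q = sqrt (ln (real nE))"
    have Ln: "ln (real nE) > 0" using c2 by (simp add: nE_def)
    have q: "q > 0" using Ln by (simp add: q_def)
    have qq: "q\<^sup>2 = ln (real nE)" using Ln by (simp add: q_def)
    have Gam: "\<Gamma> \<ge> 0"
    proof -
      have "1 \<le> 1 + real nE / (2 * exp 1) * (1 + ln (real T + 1))"
        by (intro add_increasing2 mult_nonneg_nonneg) auto
      hence "0 \<le> ln (1 + real nE / (2 * exp 1) * (1 + ln (real T + 1)))" by simp
      thus ?thesis using Ln by (simp add: \<Gamma>_def usc_Gamma_def)
    qed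
    have "Min ((\<lambda>A. R A lh) ` Astr) \<in> (\<lambda>A. R A lh) ` Astr"
      by (rule Min_in) (use algs(1,2) in auto)
    then obtain A where A: "A \<in> Astr" "R A lh = Min ((\<lambda>A. R A lh) ` Astr)"
      by (metis imageE)
    define k where "k = EStr A lh"
    have kE: "k \<in> E" unfolding k_def E_def usc_experts_def using A lh by auto
    have outk: "out k s = A lh F s" for s by (simp add: out_def k_def)
    define xt where "xt t = ml_combine E out (fst (mlst E Lf t)) (snd (mlst E Lf t)) (Suc t)" for t
    define yt where "yt t = A lh F (Suc t)" for t
    define gt where "gt t = gF (Suc t) (xt t)" for t
    define rr where "rr t = (\<Sum>j\<in>E. ml_prob E (fst (mlst E Lf t)) (snd (mlst E Lf t)) j * Lf t (fst (mlst E Lf t)) (snd (mlst E Lf t)) j)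
       - Lf t (fst (mlst E Lf t)) (snd (mlst E Lf t)) k" for t
    define dd where "dd t = norm (yt t - xt t)" for t
    have Lf_app: "Lf t w S = (if t < T then (\<lambda>i. usc_loss G D xb (gF (Suc t) (ml_combine E out w S (Suc t))) (out i (Suc t))) else (\<lambda>i. 0))" for t w S
      by (simp add: Lf_def)
    have wp: "\<forall>j\<in>E. 0 < fst (mlst E Lf t) j" for t using m.w_pos .
    have Sp: "\<forall>j. 0 \<le> snd (mlst E Lf t) j" for t by (intro allI mlst_S_nonneg)
    have xX: "xt t \<in> X" for t unfolding xt_def using combX[OF wp Sp] by simp
    have yX: "yt t \<in> X" for t unfolding yt_def using outX[OF kE, of "Suc t"] outk by simp
    have USCeq: "USC Astr Aexp Acon T G D xb F gF (Suc t) = xt t" if t: "t < T" for t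
    proof -
      have "USC Astr Aexp Acon T G D xb F gF (Suc t)
          = (case usc_state E out gF G D xb t of (w, S) \<Rightarrow> ml_combine E out w S (Suc t))"
        by (simp add: USC_def E_def out_def Let_def)
      also have "usc_state E out gF G D xb t = mlst E Lf t"
        by (rule usc_state_mlst[OF Lf_def]) (use t in simp)
      finally show ?thesis by (simp add: xt_def case_prod_unfold)
    qed
    have rr_eq: "rr t = gt t \<bullet> (xt t - yt t) / (2 * G * D)" if t: "t < T" for t
    proof -
      have Lft: "Lf t (fst (mlst E Lf t)) (snd (mlst E Lf t)) = (\<lambda>i. usc_loss G D xb (gt t) (out i (Suc t)))"
        using t by (simp add: Lf_app gt_def xt_def)
      have "rr t = usc_loss G D xb (gt t) (xt t) - usc_loss G D xb (gt t) (yt t)"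
        unfolding rr_def Lft
        by (simp add: yt_def outk lin_loss[OF finE prob_gen(2)[OF finE c2 wp Sp]] ml_combine_def xt_def)
      also have "\<dots> = gt t \<bullet> (xt t - yt t) / (2 * G * D)" using GD by (simp add: loss_diff)
      finally show ?thesis .
    qed
    have strongt: "F (Suc t) (xt t) - F (Suc t) (yt t) \<le> 2 * G * D * rr t - lam / 2 * (dd t)\<^sup>2"
      if t: "t < T" for t
    proof -
      have "strongly_convex_grad X (F (Suc t)) (gF (Suc t)) lam" using strong t by auto
      hence "F (Suc t) (yt t) \<ge> F (Suc t) (xt t) + gt t \<bullet> (yt t - xt t) + lam / 2 * (dd t)\<^sup>2"
        unfolding strongly_convex_grad_def gt_def dd_def using xX yX by blast
      moreover have "2 * G * D * rr t = gt t \<bullet> (xt t - yt t)" using rr_eq[OF t] GD by simp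
      moreover have "gt t \<bullet> (yt t - xt t) = - (gt t \<bullet> (xt t - yt t))"
        by (simp add: inner_diff_right)
      ultimately show ?thesis by linarith
    qed
    have rr2: "(rr t)\<^sup>2 \<le> ((dd t) / (2 * D))\<^sup>2" if t: "t < T" for t
    proof -
      have "norm (gt t) \<le> G" unfolding gt_def using sett[of "Suc t"] t xX by auto
      have "\<bar>gt t \<bullet> (xt t - yt t)\<bar> \<le> norm (gt t) * norm (xt t - yt t)" by (rule Cauchy_Schwarz_ineq2)
      also have "\<dots> \<le> G * dd t" unfolding dd_def using \<open>norm (gt t) \<le> G\<close>
        using mult_right_mono[OF \<open>norm (gt t) \<le> G\<close> norm_ge_zero[of "xt t - yt t"]]
        by (simp add: norm_minus_commute)
      finally have "\<bar>gt t \<bullet> (xt t - yt t)\<bar> / (2 * G * D) \<le> G * dd t / (2 * G * D)"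
        using GD by (intro divide_right_mono) auto
      hence "\<bar>rr t\<bar> \<le> dd t / (2 * D)" using rr_eq[OF t] GD by (simp add: abs_divide)
      hence "\<bar>rr t\<bar>\<^sup>2 \<le> (dd t / (2 * D))\<^sup>2" by (intro power_mono) auto
      thus ?thesis by simp
    qed
    have STk: "snd (mlst E Lf n) k = (\<Sum>t<n. (rr t)\<^sup>2)" for n
    proof (induction n)
      case 0 show ?case by (simp add: m.S0)
    next
      case (Suc n)
      show ?case unfolding m.Sstep Suc by (simp add: rr_def)
    qed
    define DD where "DD = (\<Sum>t<T. (dd t)\<^sup>2)"
    have DD0: "DD \<ge> 0" unfolding DD_def by (intro sum_nonneg) auto
    have RB: "(\<Sum>t<T. rr t) \<le> \<Gamma> * (2 + 1 / q) + \<Gamma> / q * sqrt (snd (mlst E Lf T) k)"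
      using m.regret_bound[OF kE, of T] unfolding rr_def \<Gamma>_def nE_def q_def by simp
    have "snd (mlst E Lf T) k \<le> (\<Sum>t<T. ((dd t) / (2 * D))\<^sup>2)"
      unfolding STk by (intro sum_mono rr2) auto
    also have "\<dots> = DD / (2 * D)\<^sup>2" by (simp add: DD_def power_divide sum_divide_distrib)
    finally have "sqrt (snd (mlst E Lf T) k) \<le> sqrt (DD / (2 * D)\<^sup>2)" by (rule real_sqrt_le_mono)
    also have "\<dots> = sqrt DD / (2 * D)"
    proof -
      have h: "sqrt ((2 * D)\<^sup>2) = 2 * D" using GD by (simp only: real_sqrt_abs)
      show ?thesis by (simp only: real_sqrt_divide h)
    qed
    finally have sq: "sqrt (snd (mlst E Lf T) k) \<le> sqrt DD / (2 * D)" .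
    have "(\<Sum>t<T. F (Suc t) (xt t) - F (Suc t) (yt t)) \<le> (\<Sum>t<T. 2 * G * D * rr t - lam / 2 * (dd t)\<^sup>2)"
      by (intro sum_mono strongt) auto
    also have "\<dots> = 2 * G * D * (\<Sum>t<T. rr t) - lam / 2 * DD"
      by (simp add: DD_def sum_subtractf sum_distrib_left)
    also have "\<dots> \<le> 2 * G * D * (\<Gamma> * (2 + 1 / q) + \<Gamma> / q * (sqrt DD / (2 * D))) - lam / 2 * DD"
    proof -
      have "\<Gamma> / q * sqrt (snd (mlst E Lf T) k) \<le> \<Gamma> / q * (sqrt DD / (2 * D))"
        using sq Gam q by (intro mult_left_mono) auto
      hence "(\<Sum>t<T. rr t) \<le> \<Gamma> * (2 + 1 / q) + \<Gamma> / q * (sqrt DD / (2 * D))" using RB by linarith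
      thus ?thesis using GD by (simp add: mult_left_mono)
    qed
    also have "\<dots> = 2 * \<Gamma> * G * D * (2 + 1 / q) + (G * \<Gamma> / q) * sqrt DD - lam / 2 * DD"
      using GD by (simp add: field_simps)
    also have "\<dots> \<le> 2 * \<Gamma> * G * D * (2 + 1 / q) + ((G * \<Gamma> / q)\<^sup>2 / (2 * lam) + lam * (sqrt DD)\<^sup>2 / 2) - lam / 2 * DD"
      using amgm[OF lamp, of "G * \<Gamma> / q" "sqrt DD"] by linarith
    also have "\<dots> = 2 * \<Gamma> * G * D * (2 + 1 / q) + \<Gamma>\<^sup>2 * G\<^sup>2 / (2 * lam * ln (real nE))"
      using DD0 q qq lamp by (simp add: power_divide power_mult_distrib field_simps)
    finally have main: "(\<Sum>t<T. F (Suc t) (xt t) - F (Suc t) (yt t))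
        \<le> 2 * \<Gamma> * G * D * (2 + 1 / q) + \<Gamma>\<^sup>2 * G\<^sup>2 / (2 * lam * ln (real nE))" .
    have regA: "regret X T F (A lh F) \<le> R A lh"
    proof -
      have "is_str_regret_bound X G T A lh (R A lh)" using Rbound A(1) lhp by blast
      moreover have "\<forall>t\<in>{1..T}. strongly_convex_grad X (F t) (gF t) lh"
      proof
        fix t assume "t \<in> {1..T}"
        hence sc: "strongly_convex_grad X (F t) (gF t) lam" using strong by blast
        show "strongly_convex_grad X (F t) (gF t) lh" unfolding strongly_convex_grad_def
        proof (intro ballI)
          fix x y assume xy: "x \<in> X" "y \<in> X"
          have "lh / 2 * (norm (y - x))\<^sup>2 \<le> lam / 2 * (norm (y - x))\<^sup>2"
            using lh by (intro mult_right_mono) auto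
          thus "F t x + gF t x \<bullet> (y - x) + lh / 2 * (norm (y - x))\<^sup>2 \<le> F t y"
            using sc xy unfolding strongly_convex_grad_def by fastforce
        qed
      qed
      ultimately show ?thesis using setting unfolding is_str_regret_bound_def by blast
    qed
    have "regret X T F (USC Astr Aexp Acon T G D xb F gF)
        = regret X T F (A lh F) + (\<Sum>t<T. F (Suc t) (xt t) - F (Suc t) (yt t))"
    proof -
      have "(\<Sum>t=1..T. F t (USC Astr Aexp Acon T G D xb F gF t)) = (\<Sum>t<T. F (Suc t) (xt t))"
        unfolding sum_shift1 by (intro sum.cong refl) (simp add: USCeq)
      moreover have "(\<Sum>t=1..T. F t (A lh F t)) = (\<Sum>t<T. F (Suc t) (yt t))"
        unfolding sum_shift1 yt_def by simp
      ultimately show ?thesis unfolding regret_def by (simp add: sum_subtractf)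
    qed
    also have "\<dots> \<le> Min ((\<lambda>A. R A lh) ` Astr) + (2 * \<Gamma> * G * D * (2 + 1 / q) + \<Gamma>\<^sup>2 * G\<^sup>2 / (2 * lam * ln (real nE)))"
      using regA main A(2) by linarith
    finally show ?thesis unfolding Let_def E_def[symmetric] nE_def[symmetric] \<Gamma>_def[symmetric] q_def[symmetric]
      by simp
  qed
qed

end
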